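(* Consider the admission control model described in the context, with discount rate $\alpha>0$, and suppose $0\le \Delta d_{i+1}\le \Delta d_i$ for $1\le i\le n-1$ and $\Delta d_1>0$. Then: (a) $w^S_i>0$ for all $i\in\{0,\dots,n-1\}$ and $S\in\mathcal F$; (b) for each fixed $i$, $w^S_i$ is nondecreasing in $S\in\mathcal F$ among sets containing $i$: if $S,T\in\mathcal F$ with $i\in S\subset T$, then $w^S_i\le w^T_i$.
   Context: Admission control model: a single-server queue whose number in system $L(t)\in\{0,1,\dots,n\}$ ($n\ge1$) evolves in continuous time; in state $i$ arrivals occur at rate $\lambda_i>0$ and services at rate $\mu_i>0$ ($1\le i\le n$), $\mu_0=0$. At each time the entry gate is shut ($a=1$, arrivals rejected) or open ($a=0$, arrivals admitted); in state $n$ it is always shut. Discount rate $\alpha>0$. For $S\subseteq\{0,\dots,n-1\}$, the $S$-active policy shuts the gate exactly in states $S\cup\{n\}$; $b^S_i=E_i[\int_0^\infty\lambda_{L(t)}a(t)e^{-\alpha t}dt]$ under it, starting from $i$. Marginal workloads: $w^S_i=\lambda_i[1-(b^S_{i+1}-b^S_i)]$, $0\le i\le n-1$. $\mathcal F=\{S_1,\dots,S_{n+1}\}$ with $S_k=\{k-1,\dots,n-1\}$ ($1\le k\le n$), $S_{n+1}=\emptyset$. Notation: $\Delta x_i=x_i-x_{i-1}$, $d_i=\mu_i-\lambda_i$ ($d_0=-\lambda_0$). *)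

theory Defs
  imports Main "HOL.Real"
begin

text \<open>Admission control birth-death model on states 0..n.
  lam i = arrival rate, mu i = service rate in state i, alpha = discount rate.\<close>

definition shut :: "nat \<Rightarrow> nat set \<Rightarrow> nat \<Rightarrow> bool" where
  "shut n S i \<longleftrightarrow> i \<in> S \<or> i = n"

text \<open>b^S_i: expected total discounted rejected-arrival rate under the S-active policy,
  characterised as the (unique) solution of its first-step (Bellman/Dynkin) linear equations
  for the continuous-time Markov chain:
  alpha b_i = lam_i a_i + lam_i (1 - a_i)(b_{i+1} - b_i) + mu_i (b_{i-1} - b_i).
  Outside {0..n} the function is fixed to 0 so that it is unique.\<close>
definition bS :: "nat \<Rightarrow> (nat \<Rightarrow> real) \<Rightarrow> (nat \<Rightarrow> real) \<Rightarrow> real \<Rightarrow> nat set \<Rightarrow> nat \<Rightarrow> real" where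
  "bS n lam mu alpha S = (THE b. (\<forall>i. n < i \<longrightarrow> b i = 0) \<and>
     (\<forall>i\<le>n. alpha * b i =
        (if shut n S i then lam i else lam i * (b (i + 1) - b i))
        + (if i = 0 then 0 else mu i * (b (i - 1) - b i))))"

definition wS :: "nat \<Rightarrow> (nat \<Rightarrow> real) \<Rightarrow> (nat \<Rightarrow> real) \<Rightarrow> real \<Rightarrow> nat set \<Rightarrow> nat \<Rightarrow> real" where
  "wS n lam mu alpha S i = lam i * (1 - (bS n lam mu alpha S (i + 1) - bS n lam mu alpha S i))"

definition Sk :: "nat \<Rightarrow> nat \<Rightarrow> nat set" where
  "Sk n k = (if k \<le> n then {k - 1 .. n - 1} else {})"

definition famF :: "nat \<Rightarrow> nat set set" where
  "famF n = Sk n ` {1 .. n + 1}"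

text \<open>d_i = mu_i - lam_i (with mu_0 = 0 this gives d_0 = - lam_0), and Delta d_i = d_i - d_{i-1}.\<close>
definition dd :: "(nat \<Rightarrow> real) \<Rightarrow> (nat \<Rightarrow> real) \<Rightarrow> nat \<Rightarrow> real" where
  "dd lam mu i = (if i = 0 then - lam 0 else mu i - lam i)"

definition Ddd :: "(nat \<Rightarrow> real) \<Rightarrow> (nat \<Rightarrow> real) \<Rightarrow> nat \<Rightarrow> real" where
  "Ddd lam mu i = dd lam mu i - dd lam mu (i - 1)"

end

theory Submission imports Defs begin

lemma alg1:
  fixes D Za Zb Zc Pa Pb Qb qa C u L :: real
  assumes "D \<noteq> 0" "Zb = Pb + Qb*Zc" "Za = Pa + qa*Zb" "Pb = (C + u*Pa)/D" "Qb = L/D"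
  shows "(D + u*qa)*Zb = C + L*Zc + u*Za"
proof -
  have "D*Pb = C + u*Pa" "D*Qb = L" using assms by (simp_all add: field_simps)
  then show ?thesis using assms(2,3) by (simp add: algebra_simps)
qed

lemma alg2:
  fixes D Za Zb Zc Pa qa C u L :: real
  assumes "D \<noteq> 0" "(D + u*qa)*Zb = C + L*Zc + u*Za" "u*Za = u*(Pa + qa*Zb)"
  shows "Zb = (C + u*Pa)/D + L/D * Zc"
proof -
  have "D*Zb = C + u*Pa + L*Zc" using assms(2,3) by (simp add: algebra_simps)
  then show ?thesis using assms(1) by (simp add: field_simps)
qed

locale adm =
  fixes n :: nat and lam mu :: "nat \<Rightarrow> real" and alpha :: real
  assumes n1: "1 \<le> n"
    and lam_pos: "\<And>i. i \<le> n \<Longrightarrow> 0 < lam i"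
    and mu_pos: "\<And>i. 1 \<le> i \<Longrightarrow> i \<le> n \<Longrightarrow> 0 < mu i"
    and mu0: "mu 0 = 0"
    and alpha_pos: "0 < alpha"
    and c_pos: "\<And>i. 1 \<le> i \<Longrightarrow> i \<le> n \<Longrightarrow> 0 < alpha + Ddd lam mu i"
begin

definition c :: "nat \<Rightarrow> real" where "c i = alpha + Ddd lam mu i"

lemma Ddd_Suc: "Ddd lam mu (Suc m) = mu (Suc m) - lam (Suc m) - mu m + lam m"
  by (simp add: Ddd_def dd_def mu0)

lemma mu_nn: "i \<le> n \<Longrightarrow> 0 \<le> mu i"
  using mu_pos[of i] mu0 by (cases i) auto

primrec qq :: "nat \<Rightarrow> nat \<Rightarrow> real" where
  "qq j 0 = 0"
| "qq j (Suc i) = (if Suc i < j then lam (Suc i) else 0) /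
      (alpha + mu (Suc i) + (if i < j then lam i else 0) - mu i * qq j i)"

definition dn :: "nat \<Rightarrow> nat \<Rightarrow> real" where
  "dn j i = alpha + mu (Suc i) + (if i < j then lam i else 0) - mu i * qq j i"

lemma qq_Suc': "qq j (Suc i) = (if Suc i < j then lam (Suc i) else 0) / dn j i"
  by (simp add: dn_def)

lemma qq_zero: "j \<le> m \<Longrightarrow> qq j m = 0"
  by (cases m) auto

primrec pp :: "nat \<Rightarrow> nat \<Rightarrow> real" where
  "pp j 0 = 0"
| "pp j (Suc i) = (c (Suc i) + mu i * pp j i) / dn j i"

lemma qq_inv: "i \<le> n \<Longrightarrow> 0 \<le> qq j i \<and> mu i * qq j i \<le> (if i < j then lam i else 0)"
proof (induction i)
  case 0
  then show ?case using mu0 lam_pos[of 0] by simp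
next
  case (Suc i)
  then have IH: "0 \<le> qq j i" "mu i * qq j i \<le> (if i < j then lam i else 0)" by auto
  have dge: "alpha + mu (Suc i) \<le> dn j i" using IH(2) unfolding dn_def by (cases "i < j") auto
  have mp: "0 < mu (Suc i)" using mu_pos[of "Suc i"] Suc.prems by simp
  have dp: "0 < dn j i" using dge mp alpha_pos by linarith
  define L where "L = (if Suc i < j then lam (Suc i) else 0)"
  have L0: "0 \<le> L" using lam_pos[of "Suc i"] Suc.prems unfolding L_def by auto
  have q: "qq j (Suc i) = L / dn j i" unfolding L_def by (rule qq_Suc')
  have "mu (Suc i) * (L / dn j i) \<le> L"
  proof -
    have "mu (Suc i) * L \<le> dn j i * L" using dge alpha_pos L0 by (intro mult_right_mono) auto
    then show ?thesis using dp by (simp add: field_simps)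
  qed
  then show ?case using q L0 dp L_def by auto
qed

lemma dn_ge: "i < n \<Longrightarrow> alpha + mu (Suc i) \<le> dn j i"
  using qq_inv[of i j] unfolding dn_def by (cases "i < j") auto

lemma dn_pos: "i < n \<Longrightarrow> 0 < dn j i"
  using dn_ge[of i j] mu_nn[of "Suc i"] alpha_pos by linarith

lemma pp_pos: "i \<le> n \<Longrightarrow> 0 \<le> pp j i \<and> (1 \<le> i \<longrightarrow> 0 < pp j i)"
proof (induction i)
  case 0
  then show ?case by simp
next
  case (Suc i)
  have "0 < c (Suc i)" using c_pos[of "Suc i"] Suc.prems by (simp add: c_def)
  moreover have "0 \<le> mu i * pp j i" using Suc mu_nn[of i] by simp
  moreover have "0 < dn j i" using dn_pos Suc.prems by simp
  ultimately show ?case by simp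
qed


primrec zb :: "nat \<Rightarrow> nat \<Rightarrow> real" where
  "zb j 0 = pp j n"
| "zb j (Suc k) = pp j (n - Suc k) + qq j (n - Suc k) * zb j k"

definition zs :: "nat \<Rightarrow> nat \<Rightarrow> real" where "zs j i = zb j (n - i)"

lemma qq_n: "j \<le> n \<Longrightarrow> qq j n = 0"
  by (rule qq_zero)

lemma zs_rec: assumes "j \<le> n" "i \<le> n" shows "zs j i = pp j i + qq j i * zs j (Suc i)"
proof (cases "i = n")
  case True
  then show ?thesis using qq_n[OF assms(1)] by (simp add: zs_def)
next
  case False
  then have "n - i = Suc (n - Suc i)" using assms by simp
  moreover have "n - Suc (n - Suc i) = i" using False assms by simp
  ultimately show ?thesis by (simp add: zs_def)
qed

lemma zs_pos: assumes "j \<le> n" "1 \<le> i" "i \<le> n" shows "0 < zs j i"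
proof -
  have "1 \<le> i \<longrightarrow> 0 < zs j i" using assms(3)
  proof (induction i rule: inc_induct)
    case base
    then show ?case using zs_rec[OF assms(1), of n] qq_n[OF assms(1)] pp_pos[of n j] by simp
  next
    case (step i)
    show ?case
    proof
      assume "1 \<le> i"
      then have "0 < pp j i" using pp_pos[of i j] step by simp
      moreover have "0 \<le> qq j i" using qq_inv[of i j] step by simp
      moreover have "0 < zs j (Suc i)" using step by simp
      ultimately show "0 < zs j i" using zs_rec[OF assms(1), of i] step
        by (simp add: add_pos_nonneg)
    qed
  qed
  then show ?thesis using assms by simp
qed

definition zrow :: "nat \<Rightarrow> (nat \<Rightarrow> real) \<Rightarrow> nat \<Rightarrow> bool" where
  "zrow j z m \<longleftrightarrow> (alpha + mu (Suc m) + (if m < j then lam m else 0)) * z (Suc m)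
     = c (Suc m) + (if Suc m < j then lam (Suc m) else 0) * z (Suc (Suc m)) + mu m * z m"

lemma zs_solves: assumes "j \<le> n" "m < n" shows "zrow j (zs j) m"
proof -
  have e: "alpha + mu (Suc m) + (if m < j then lam m else 0) = dn j m + mu m * qq j m"
    by (simp add: dn_def)
  show ?thesis unfolding zrow_def e
    apply (rule alg1[where Pb = "pp j (Suc m)" and Qb = "qq j (Suc m)" and Pa = "pp j m"])
    using dn_pos[OF assms(2), of j] zs_rec[OF assms(1), of "Suc m"] zs_rec[OF assms(1), of m] assms
      qq_Suc'[of j m]
    by auto
qed

lemma elim_any: assumes "j \<le> n" "\<forall>m<n. zrow j z m" "m < n"
  shows "z (Suc m) = pp j (Suc m) + qq j (Suc m) * z (Suc (Suc m))"
  using assms(3)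
proof (induction m)
  case 0
  have e: "alpha + mu (Suc 0) + (if 0 < j then lam 0 else 0) = dn j 0 + mu 0 * qq j 0"
    by (simp add: dn_def)
  have r: "zrow j z 0" using assms 0 by simp
  show ?case unfolding pp.simps qq_Suc'
    by (rule alg2[where Pa = 0 and qa = "qq j 0"]) (use r[unfolded zrow_def e] dn_pos[of 0 j] 0 mu0 in auto)
next
  case (Suc m)
  have e: "alpha + mu (Suc (Suc m)) + (if Suc m < j then lam (Suc m) else 0) = dn j (Suc m) + mu (Suc m) * qq j (Suc m)"
    by (simp add: dn_def)
  have r: "zrow j z (Suc m)" using assms Suc by simp
  show ?case unfolding pp.simps(2)[of j "Suc m"] qq_Suc'[of j "Suc m"]
    apply (rule alg2[where Pa = "pp j (Suc m)" and qa = "qq j (Suc m)"])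
    using dn_pos[of "Suc m" j] Suc.prems apply simp
     apply (rule r[unfolded zrow_def e])
    using Suc.IH Suc.prems by simp
qed

lemma z_unique: assumes "j \<le> n" "\<forall>m<n. zrow j z m" "1 \<le> i" "i \<le> n"
  shows "z i = zs j i"
proof -
  have "1 \<le> i \<longrightarrow> z i = zs j i" using assms(4)
  proof (induction i rule: inc_induct)
    case base
    have "z n = pp j n + qq j n * z (Suc n)"
      using elim_any[OF assms(1,2), of "n - 1"] n1 by simp
    then show ?case using zs_rec[OF assms(1), of n] qq_n[OF assms(1)] by simp
  next
    case (step i)
    show ?case
    proof
      assume "1 \<le> i"
      then have "z i = pp j i + qq j i * z (Suc i)"
        using elim_any[OF assms(1,2), of "i - 1"] step by simp
      then show "z i = zs j i" using step zs_rec[OF assms(1), of i] by simp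
    qed
  qed
  then show ?thesis using assms by simp
qed


definition E :: "nat \<Rightarrow> (nat \<Rightarrow> real) \<Rightarrow> nat \<Rightarrow> bool" where
  "E j b i \<longleftrightarrow> alpha * b i = (if j \<le> i then lam i else lam i * (b (i + 1) - b i))
      + (if i = 0 then 0 else mu i * (b (i - 1) - b i))"

definition Zf :: "(nat \<Rightarrow> real) \<Rightarrow> nat \<Rightarrow> real" where
  "Zf b i = 1 - (b i - b (i - 1))"

lemma step: assumes "j \<le> n" "m < n" "E j b m"
  shows "E j b (Suc m) \<longleftrightarrow> zrow j (Zf b) m"
proof -
  have cc: "c (Suc m) = alpha + (mu (Suc m) - lam (Suc m) - mu m + lam m)"
    by (simp add: c_def Ddd_Suc)
  show ?thesis
  proof (cases m)
    case 0
    then show ?thesis using assms mu0 unfolding E_def zrow_def Zf_def cc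
      by (cases "Suc 0 < j"; cases "0 < j") (auto simp: algebra_simps)
  next
    case (Suc k)
    then show ?thesis using assms unfolding E_def zrow_def Zf_def cc
      by (cases "Suc m < j"; cases "m < j") (auto simp: algebra_simps)
  qed
qed


definition b0 :: "nat \<Rightarrow> real" where
  "b0 j = (if j = 0 then lam 0 else lam 0 * (1 - zs j 1)) / alpha"

definition bb :: "nat \<Rightarrow> nat \<Rightarrow> real" where
  "bb j i = (if n < i then 0 else b0 j + (\<Sum>k\<in>{1..i}. 1 - zs j k))"

lemma bb_diff: "Suc m \<le> n \<Longrightarrow> bb j (Suc m) - bb j m = 1 - zs j (Suc m)"
  by (simp add: bb_def)

lemma Zf_bb: "Suc m \<le> n \<Longrightarrow> Zf (bb j) (Suc m) = zs j (Suc m)"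
  using bb_diff[of m j] by (simp add: Zf_def)

lemma zrow_cong: assumes "z (Suc m) = z' (Suc m)" "Suc m < j \<Longrightarrow> z (Suc (Suc m)) = z' (Suc (Suc m))"
  "m \<noteq> 0 \<Longrightarrow> z m = z' m"
  shows "zrow j z m \<longleftrightarrow> zrow j z' m"
  using assms mu0 unfolding zrow_def by (cases "m = 0"; cases "Suc m < j") auto

lemma bb_E: assumes "j \<le> n" "i \<le> n" shows "E j (bb j) i"
  using assms(2)
proof (induction i)
  case 0
  have d: "bb j (Suc 0) = bb j 0 + (1 - zs j 1)" using bb_diff[of 0 j] n1 by simp
  moreover have "bb j 0 = b0 j" by (simp add: bb_def)
  ultimately show ?case using alpha_pos unfolding E_def b0_def by (simp add: d)
next
  case (Suc m)
  have "zrow j (Zf (bb j)) m"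
  proof (subst zrow_cong)
    show "Zf (bb j) (Suc m) = zs j (Suc m)" using Zf_bb Suc by simp
    show "Zf (bb j) (Suc (Suc m)) = zs j (Suc (Suc m))" if "Suc m < j"
      using Zf_bb[of "Suc m" j] that assms by simp
    show "Zf (bb j) m = zs j m" if "m \<noteq> 0"
      using Zf_bb[of "m - 1" j] that Suc by simp
    show "zrow j (zs j) m" using zs_solves assms Suc by simp
  qed
  then show ?case using step[OF assms(1), of m "bb j"] Suc by simp
qed

lemma E_unique: assumes "j \<le> n" "\<forall>i. n < i \<longrightarrow> b i = 0" "\<forall>i\<le>n. E j b i"
  shows "b = bb j"
proof -
  have zr: "\<forall>m<n. zrow j (Zf b) m"
  proof (intro allI impI)
    fix m assume m: "m < n"
    then have "E j b m" "E j b (Suc m)" using assms(3) by auto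
    then show "zrow j (Zf b) m" using step[OF assms(1) m] by simp
  qed
  have zb: "Zf b i = zs j i" if "1 \<le> i" "i \<le> n" for i
    using z_unique[OF assms(1) zr that] .
  have e0: "E j b 0" using assms(3) by simp
  have d: "b (Suc 0) = b 0 + (1 - zs j 1)" using zb[of 1] n1 by (simp add: Zf_def)
  have b0e: "b 0 = b0 j" using e0 alpha_pos unfolding E_def b0_def
    by (auto simp: field_simps d)
  have "b i = bb j i" if "i \<le> n" for i
    using that
  proof (induction i)
    case 0
    then show ?case using b0e by (simp add: bb_def)
  next
    case (Suc m)
    have "b (Suc m) - b m = 1 - zs j (Suc m)" using zb[of "Suc m"] Suc.prems by (simp add: Zf_def)
    then show ?case using Suc bb_diff[of m j] by simp
  qed
  then show ?thesis using assms(2) by (auto simp: bb_def)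
qed

lemma shut_iff: "j \<le> n \<Longrightarrow> i \<le> n \<Longrightarrow> shut n {j..<n} i \<longleftrightarrow> j \<le> i"
  by (auto simp: shut_def)

lemma bS_eq: assumes "j \<le> n" shows "bS n lam mu alpha {j..<n} = bb j"
  unfolding bS_def
proof (rule the_equality)
  show "(\<forall>i. n < i \<longrightarrow> bb j i = 0) \<and>
    (\<forall>i\<le>n. alpha * bb j i = (if shut n {j..<n} i then lam i else lam i * (bb j (i + 1) - bb j i)) +
             (if i = 0 then 0 else mu i * (bb j (i - 1) - bb j i)))"
    using bb_E[OF assms] shut_iff[OF assms] unfolding E_def by (auto simp: bb_def)
  fix b assume h: "(\<forall>i. n < i \<longrightarrow> b i = 0) \<and>
    (\<forall>i\<le>n. alpha * b i = (if shut n {j..<n} i then lam i else lam i * (b (i + 1) - b i)) +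
             (if i = 0 then 0 else mu i * (b (i - 1) - b i)))"
  have "\<forall>i\<le>n. E j b i" using h shut_iff[OF assms] unfolding E_def by auto
  then show "b = bb j" using E_unique[OF assms] h by auto
qed

lemma wS_eq: assumes "j \<le> n" "i < n" shows "wS n lam mu alpha {j..<n} i = lam i * zs j (Suc i)"
  using bS_eq[OF assms(1)] bb_diff[of i j] assms by (simp add: wS_def)


lemma pp_eq: assumes "j' < j" shows "m \<le> j' \<Longrightarrow> pp j m = pp j' m \<and> (m < j' \<longrightarrow> qq j m = qq j' m)"
proof (induction m)
  case 0
  then show ?case by simp
next
  case (Suc m)
  then have IH: "pp j m = pp j' m" "qq j m = qq j' m" by auto
  have "dn j m = dn j' m" using IH Suc.prems assms by (simp add: dn_def)
  then show ?case using IH Suc.prems assms by (auto simp: qq_Suc')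
qed

lemma pp_le: assumes "j' < j" "j \<le> n" shows "j' \<le> m \<Longrightarrow> m \<le> n \<Longrightarrow> pp j m \<le> pp j' m"
proof (induction m)
  case 0
  then show ?case by simp
next
  case (Suc m)
  show ?case
  proof (cases "Suc m \<le> j'")
    case True
    then show ?thesis using pp_eq[OF assms(1) True] by simp
  next
    case False
    then have m: "j' \<le> m" "m < n" using Suc.prems by auto
    then have IH: "pp j m \<le> pp j' m" using Suc by simp
    have d': "dn j' m = alpha + mu (Suc m)" using m qq_zero[of j' m] by (simp add: dn_def)
    have d: "alpha + mu (Suc m) \<le> dn j m" using dn_ge m by simp
    have dp: "0 < alpha + mu (Suc m)" using alpha_pos mu_nn[of "Suc m"] m by simp
    have "0 \<le> c (Suc m) + mu m * pp j m"
      using c_pos[of "Suc m"] m mu_nn[of m] pp_pos[of m j] by (simp add: c_def)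
    moreover have "c (Suc m) + mu m * pp j m \<le> c (Suc m) + mu m * pp j' m"
      using IH mu_nn[of m] m by (simp add: mult_left_mono)
    ultimately have "(c (Suc m) + mu m * pp j m) / dn j m \<le> (c (Suc m) + mu m * pp j' m) / (alpha + mu (Suc m))"
      using d dp by (intro frac_le) auto
    then show ?thesis using d' by simp
  qed
qed

lemma zs_mono: assumes "j' < j" "j \<le> n" "j \<le> i" "i < n"
  shows "zs j (Suc i) \<le> zs j' (Suc i)"
proof -
  have "zs j (Suc i) = pp j (Suc i)" using zs_rec[of j "Suc i"] qq_zero[of j "Suc i"] assms by simp
  moreover have "zs j' (Suc i) = pp j' (Suc i)" using zs_rec[of j' "Suc i"] qq_zero[of j' "Suc i"] assms by simp
  ultimately show ?thesis using pp_le[OF assms(1,2), of "Suc i"] assms by simp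
qed

end

lemma famF_char: assumes "1 \<le> n" "S \<in> famF n" shows "\<exists>j\<le>n. S = {j..<n}"
proof -
  obtain k where k: "k \<in> {1..n+1}" "S = Sk n k" using assms(2) unfolding famF_def by auto
  show ?thesis
  proof (cases "k \<le> n")
    case True
    then have "S = {k - 1..<n}" using k assms(1) unfolding Sk_def by auto
    then show ?thesis using True by (intro exI[of _ "k - 1"]) auto
  next
    case False
    then have "S = {n..<n}" using k unfolding Sk_def by auto
    then show ?thesis by auto
  qed
qed

theorem proposition10:
  fixes n :: nat and lam mu :: "nat \<Rightarrow> real" and alpha :: real
  assumes n1: "1 \<le> n"
    and lam_pos: "\<forall>i\<le>n. 0 < lam i"
    and mu_pos: "\<forall>i. 1 \<le> i \<and> i \<le> n \<longrightarrow> 0 < mu i"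
    and mu0: "mu 0 = 0"
    and alpha_pos: "0 < alpha"
    and conc: "\<forall>i. 1 \<le> i \<and> i \<le> n - 1 \<longrightarrow>
                 0 \<le> Ddd lam mu (i + 1) \<and> Ddd lam mu (i + 1) \<le> Ddd lam mu i"
    and D1: "0 < Ddd lam mu 1"
  shows "(\<forall>S\<in>famF n. \<forall>i\<le>n - 1. 0 < wS n lam mu alpha S i)
       \<and> (\<forall>i S T. S \<in> famF n \<and> T \<in> famF n \<and> i \<in> S \<and> S \<subset> T
              \<longrightarrow> wS n lam mu alpha S i \<le> wS n lam mu alpha T i)"
proof -
  have cp: "0 < alpha + Ddd lam mu i" if "1 \<le> i" "i \<le> n" for i
  proof (cases "i = 1")
    case True
    then show ?thesis using D1 alpha_pos by simp
  next
    case False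
    then have "1 \<le> i - 1 \<and> i - 1 \<le> n - 1" using that by auto
    then have "0 \<le> Ddd lam mu (i - 1 + 1)" using conc by blast
    then show ?thesis using False that alpha_pos by simp
  qed
  interpret adm n lam mu alpha
    using n1 lam_pos mu_pos mu0 alpha_pos cp by unfold_locales auto
  show ?thesis
  proof
    show "\<forall>S\<in>famF n. \<forall>i\<le>n - 1. 0 < wS n lam mu alpha S i"
    proof (intro ballI allI impI)
      fix S i assume S: "S \<in> famF n" and i: "i \<le> n - 1"
      obtain j where j: "j \<le> n" "S = {j..<n}" using famF_char[OF n1 S] by auto
      have "i < n" using i n1 by simp
      then show "0 < wS n lam mu alpha S i"
        using wS_eq[OF j(1)] j zs_pos[OF j(1), of "Suc i"] lam_pos by simp
    qed
    show "\<forall>i S T. S \<in> famF n \<and> T \<in> famF n \<and> i \<in> S \<and> S \<subset> T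
              \<longrightarrow> wS n lam mu alpha S i \<le> wS n lam mu alpha T i"
    proof (intro allI impI)
      fix i S T assume h: "S \<in> famF n \<and> T \<in> famF n \<and> i \<in> S \<and> S \<subset> T"
      obtain j where j: "j \<le> n" "S = {j..<n}" using famF_char[OF n1] h by blast
      obtain j' where j': "j' \<le> n" "T = {j'..<n}" using famF_char[OF n1] h by blast
      have ij: "j \<le> i" "i < n" using h j by auto
      have "j' < j"
      proof (rule ccontr)
        assume "\<not> j' < j"
        then have "T \<subseteq> S" using j j' by auto
        then show False using h by auto
      qed
      then have "zs j (Suc i) \<le> zs j' (Suc i)" using zs_mono j ij by simp
      then show "wS n lam mu alpha S i \<le> wS n lam mu alpha T i"
        using wS_eq[OF j(1) ij(2)] wS_eq[OF j'(1) ij(2)] j j' lam_pos ij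
        by (simp add: mult_left_mono)
    qed
  qed
qed

end
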